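(* Let $\tau$ be a topology on $\mathbb{R}$ such that $\tau_e\subset\tau$, every nonempty $\tau$-open set has the Baire property and is non-meager, and $\tau_\ast\subset\tau$. Then the class of $\tau_\ast$-Świątkowski functions coincides with the class of $\tau$-Świątkowski functions.
   Context: $\tau_e$ is the Euclidean topology; meagerness and the Baire property refer to $\tau_e$. $\tau_\ast=\{U\setminus M: U\in\tau_e,\ M\text{ meager}\}$. For a topology $\sigma$ and $f\colon\mathbb{R}\to\mathbb{R}$, $\mathrm{C}_\sigma(f)$ is the set of points at which $f\colon(\mathbb{R},\sigma)\to(\mathbb{R},\tau_e)$ is continuous, and $f$ is a $\sigma$-Świątkowski function if for all $a,b$ with $f(a)<f(b)$ there exists $x\in\mathrm{C}_\sigma(f)$ strictly between $a$ and $b$ with $f(a)<f(x)<f(b)$. *)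

theory Defs
  imports "HOL-Analysis.Analysis"
begin

definition nowhere_dense :: "real set \<Rightarrow> bool" where
  "nowhere_dense A \<longleftrightarrow> interior (closure A) = {}"

definition meager :: "real set \<Rightarrow> bool" where
  "meager M \<longleftrightarrow> (\<exists>N :: nat \<Rightarrow> real set. (\<forall>n. nowhere_dense (N n)) \<and> M \<subseteq> (\<Union>n. N n))"

definition baire_property :: "real set \<Rightarrow> bool" where
  "baire_property A \<longleftrightarrow> (\<exists>U. open U \<and> meager ((A - U) \<union> (U - A)))"

definition tau_star_open :: "real set \<Rightarrow> bool" where
  "tau_star_open S \<longleftrightarrow> (\<exists>U M. open U \<and> meager M \<and> S = U - M)"

definition cont_points :: "(real set \<Rightarrow> bool) \<Rightarrow> (real \<Rightarrow> real) \<Rightarrow> real set" where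
  "cont_points opn f = {x. \<forall>V. open V \<and> f x \<in> V \<longrightarrow> (\<exists>U. opn U \<and> x \<in> U \<and> f ` U \<subseteq> V)}"

definition swiatkowski :: "(real set \<Rightarrow> bool) \<Rightarrow> (real \<Rightarrow> real) \<Rightarrow> bool" where
  "swiatkowski opn f \<longleftrightarrow>
     (\<forall>a b. f a < f b \<longrightarrow>
        (\<exists>x \<in> cont_points opn f. min a b < x \<and> x < max a b \<and> f a < f x \<and> f x < f b))"

end

theory Submission
  imports Defs
begin

lemma nowhere_dense_empty: "nowhere_dense {}" by (simp add: nowhere_dense_def)

lemma meager_empty: "meager {}"
  unfolding meager_def by (rule exI[of _ "\<lambda>n. {}"]) (simp add: nowhere_dense_empty)

lemma meager_subset: "meager B \<Longrightarrow> A \<subseteq> B \<Longrightarrow> meager A"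
  unfolding meager_def by blast

lemma nowhere_dense_meager: "nowhere_dense A \<Longrightarrow> meager A"
  unfolding meager_def by (rule exI[of _ "\<lambda>n. A"]) auto

lemma meager_UN:
  assumes "countable I" "\<And>i. i \<in> I \<Longrightarrow> meager (F i)"
  shows "meager (\<Union>i\<in>I. F i)"
proof (cases "I = {}")
  case True then show ?thesis by (simp add: meager_empty)
next
  case False
  have "\<forall>i\<in>I. \<exists>N::nat \<Rightarrow> real set. (\<forall>n. nowhere_dense (N n)) \<and> F i \<subseteq> (\<Union>n. N n)"
  proof
    fix i assume "i \<in> I"
    from assms(2)[OF this] show "\<exists>N::nat \<Rightarrow> real set. (\<forall>n. nowhere_dense (N n)) \<and> F i \<subseteq> (\<Union>n. N n)"
      unfolding meager_def by blast
  qed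
  then have "\<exists>NN. \<forall>i\<in>I. (\<forall>n. nowhere_dense (NN i n)) \<and> F i \<subseteq> (\<Union>n::nat. NN i n)"
    by (rule bchoice)
  then obtain NN :: "_ \<Rightarrow> nat \<Rightarrow> real set" where NN: "\<forall>i\<in>I. (\<forall>n. nowhere_dense (NN i n)) \<and> F i \<subseteq> (\<Union>n. NN i n)"
    by blast
  define g where "g = from_nat_into I"
  have rg: "range g = I" using range_from_nat_into[OF False assms(1)] g_def by simp
  define N where "N m = NN (g (fst (prod_decode m))) (snd (prod_decode m))" for m
  show ?thesis unfolding meager_def
  proof (intro exI[of _ N] conjI allI)
    fix m have "g (fst (prod_decode m)) \<in> I" using rg by blast
    then show "nowhere_dense (N m)" unfolding N_def using NN by blast
  next
    show "(\<Union>i\<in>I. F i) \<subseteq> (\<Union>m. N m)"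
    proof
      fix x assume "x \<in> (\<Union>i\<in>I. F i)"
      then obtain i where i: "i \<in> I" "x \<in> F i" by blast
      then obtain k where k: "g k = i" using rg by blast
      from NN i obtain n where "x \<in> NN i n" by blast
      hence "x \<in> N (prod_encode (k,n))" unfolding N_def using k by simp
      thus "x \<in> (\<Union>m. N m)" by blast
    qed
  qed
qed

lemma meager_Un: "meager A \<Longrightarrow> meager B \<Longrightarrow> meager (A \<union> B)"
proof -
  assume "meager A" "meager B"
  hence "meager (\<Union>b\<in>{True,False}. if b then A else B)"
    by (intro meager_UN) auto
  moreover have "(\<Union>b\<in>{True,False}. if b then A else B) = A \<union> B" by auto
  ultimately show ?thesis by simp
qed

lemma rat_interval:
  fixes W :: "real set" assumes "open W" "w \<in> W"
  shows "\<exists>p q. p \<in> \<rat> \<and> q \<in> \<rat> \<and> p < q \<and> {p<..<q} \<subseteq> W"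
proof -
  obtain r where r: "r > 0" "ball w r \<subseteq> W" using assms open_contains_ball by blast
  obtain p where p: "p \<in> \<rat>" "w - r < p" "p < w" using Rats_dense_in_real[of "w-r" w] r by auto
  obtain q where q: "q \<in> \<rat>" "w < q" "q < w + r" using Rats_dense_in_real[of w "w+r"] r by auto
  have "{p<..<q} \<subseteq> ball w r" using p q by (auto simp: ball_eq_greaterThanLessThan)
  then have "{p<..<q} \<subseteq> W" using r(2) by (rule subset_trans)
  moreover have "p < q" using p(3) q(2) by linarith
  ultimately show ?thesis using p(1) q(1) by blast
qed

lemma key:
  fixes T :: "real topology" and f :: "real \<Rightarrow> real"
  assumes op: "\<And>U. open U \<Longrightarrow> openin T U"
    and bp: "\<And>S. openin T S \<Longrightarrow> baire_property S"
    and nm: "\<And>S. openin T S \<Longrightarrow> S \<noteq> {} \<Longrightarrow> \<not> meager S"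
    and sw: "swiatkowski (openin T) f"
    and US: "meager (U - S)"
    and O: "p < q" "{p<..<q} \<subseteq> U" and e: "e > 0"
  shows "\<exists>p' q'. p' \<in> \<rat> \<and> q' \<in> \<rat> \<and> p' < q' \<and> {p'<..<q'} \<subseteq> {p<..<q}
           \<and> (\<exists>c. meager ({p'<..<q'} - f -` ball c e))"
proof -
  let ?O = "{p<..<q}"
  have Onm: "\<not> meager ?O" using nm[OF op] O(1) by auto
  have "?O \<inter> S \<noteq> {}"
  proof
    assume "?O \<inter> S = {}"
    then have "?O \<subseteq> U - S" using O(2) by blast
    then show False using Onm US meager_subset by blast
  qed
  then obtain y where y: "y \<in> ?O \<inter> S" by blast
  have ex: "\<exists>W c. open W \<and> W \<noteq> {} \<and> W \<subseteq> ?O \<and> meager (W - f -` ball c e)"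
  proof (cases "\<forall>z\<in>?O \<inter> S. f z = f y")
    case True
    have "?O - f -` ball (f y) e \<subseteq> U - S" using True O(2) e by auto
    then have "meager (?O - f -` ball (f y) e)" using US meager_subset by blast
    then show ?thesis using y by (intro exI[of _ ?O] exI[of _ "f y"]) auto
  next
    case False
    then obtain z where z: "z \<in> ?O \<inter> S" "f z \<noteq> f y" by blast
    have "\<exists>u v. u\<in>?O \<and> v\<in>?O \<and> f u < f v"
    proof (cases "f z < f y")
      case True thus ?thesis using y z by blast
    next
      case False hence "f y < f z" using z(2) by auto
      thus ?thesis using y z by blast
    qed
    then obtain u v where uv: "u\<in>?O" "v\<in>?O" "f u < f v" by blast
    then obtain x where x: "x \<in> cont_points (openin T) f" "min u v < x" "x < max u v"
      using sw unfolding swiatkowski_def by blast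
    have xO: "x \<in> ?O" using x uv by (simp add: min_def max_def split: if_splits)
    have "\<forall>V. open V \<and> f x \<in> V \<longrightarrow> (\<exists>U. openin T U \<and> x \<in> U \<and> f ` U \<subseteq> V)"
      using x(1) unfolding cont_points_def by simp
    moreover have "open (ball (f x) e) \<and> f x \<in> ball (f x) e" using e by simp
    ultimately obtain S' where S': "openin T S'" "x \<in> S'" "f ` S' \<subseteq> ball (f x) e"
      by blast
    let ?S2 = "S' \<inter> ?O"
    have S2: "openin T ?S2" using S'(1) op by (simp add: openin_Int)
    have S2ne: "?S2 \<noteq> {}" using S'(2) xO by blast
    obtain W where W: "open W" "meager ((?S2 - W) \<union> (W - ?S2))"
      using bp[OF S2] unfolding baire_property_def by blast
    have "W \<inter> ?O \<noteq> {}"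
    proof
      assume "W \<inter> ?O = {}"
      hence "?S2 \<subseteq> (?S2 - W) \<union> (W - ?S2)" by blast
      thus False using nm[OF S2 S2ne] W(2) meager_subset by blast
    qed
    moreover have "(W \<inter> ?O) - f -` ball (f x) e \<subseteq> (?S2 - W) \<union> (W - ?S2)"
      using S'(3) by (auto simp: image_subset_iff)
    ultimately show ?thesis using W meager_subset
      by (intro exI[of _ "W \<inter> ?O"] exI[of _ "f x"]) auto
  qed
  then obtain W c where W: "open W" "W \<noteq> {}" "W \<subseteq> ?O" "meager (W - f -` ball c e)" by blast
  then obtain w where "w \<in> W" by blast
  then obtain p' q' where pq: "p' \<in> \<rat>" "q' \<in> \<rat>" "p' < q'" "{p'<..<q'} \<subseteq> W"
    using rat_interval W(1) by blast
  have "{p'<..<q'} - f -` ball c e \<subseteq> W - f -` ball c e" using pq by blast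
  then have m: "meager ({p'<..<q'} - f -` ball c e)" by (rule meager_subset[OF W(4)])
  have "{p'<..<q'} \<subseteq> ?O" using pq(4) W(3) by (rule subset_trans)
  then show ?thesis using pq(1,2,3) m
    by (intro exI[of _ p'] exI[of _ q'] conjI exI[of _ c])
qed

theorem mainTheorem15:
  fixes T :: "real topology"
  assumes "\<forall>U. open U \<longrightarrow> openin T U"
    and "\<forall>S. openin T S \<and> S \<noteq> {} \<longrightarrow> baire_property S \<and> \<not> meager S"
    and "\<forall>S. tau_star_open S \<longrightarrow> openin T S"
  shows "\<forall>f. swiatkowski tau_star_open f \<longleftrightarrow> swiatkowski (openin T) f"
proof (intro allI iffI)
  fix f assume sw: "swiatkowski tau_star_open f"
  have "cont_points tau_star_open f \<subseteq> cont_points (openin T) f"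
    unfolding cont_points_def using assms(3) by blast
  with sw show "swiatkowski (openin T) f" unfolding swiatkowski_def by blast
next
  fix f assume sw: "swiatkowski (openin T) f"
  have op: "\<And>U. open U \<Longrightarrow> openin T U" using assms(1) by blast
  have nm: "\<And>S. openin T S \<Longrightarrow> S \<noteq> {} \<Longrightarrow> \<not> meager S" using assms(2) by blast
  have bp: "\<And>S. openin T S \<Longrightarrow> baire_property S"
  proof -
    fix S assume "openin T S"
    show "baire_property S"
    proof (cases "S = {}")
      case True
      show ?thesis unfolding baire_property_def using True meager_empty
        by (intro exI[of _ "{}"]) auto
    qed (use assms(2) \<open>openin T S\<close> in blast)
  qed
  show "swiatkowski tau_star_open f" unfolding swiatkowski_def
  proof (intro allI impI)
    fix a b assume ab: "f a < f b"
    obtain x0 where x0: "x0 \<in> cont_points (openin T) f" "min a b < x0" "x0 < max a b"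
      "f a < f x0" "f x0 < f b"
      using sw ab unfolding swiatkowski_def by blast
    have "\<forall>V. open V \<and> f x0 \<in> V \<longrightarrow> (\<exists>U. openin T U \<and> x0 \<in> U \<and> f ` U \<subseteq> V)"
      using x0(1) unfolding cont_points_def by simp
    moreover have "open {f a<..<f b} \<and> f x0 \<in> {f a<..<f b}" using x0 by simp
    ultimately obtain S0 where S0: "openin T S0" "x0 \<in> S0" "f ` S0 \<subseteq> {f a<..<f b}"
      by blast
    define S where "S = S0 \<inter> {min a b<..<max a b}"
    have S: "openin T S" unfolding S_def using S0(1) op by (simp add: openin_Int)
    have Sne: "S \<noteq> {}" unfolding S_def using S0(2) x0 by auto
    obtain U where U: "open U" "meager ((S - U) \<union> (U - S))"
      using bp[OF S] unfolding baire_property_def by blast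
    have US: "meager (U - S)" using U(2) meager_subset by blast
    have USnm: "\<not> meager (U \<inter> S)"
    proof
      assume "meager (U \<inter> S)"
      moreover have "S \<subseteq> (U \<inter> S) \<union> ((S - U) \<union> (U - S))" by blast
      ultimately show False using nm[OF S Sne] U(2) meager_Un meager_subset by blast
    qed
    define J where "J pq = {real_of_rat (fst pq)<..<real_of_rat (snd pq)}" for pq :: "rat \<times> rat"
    define good where "good n pq \<longleftrightarrow> (\<exists>c. meager (J pq - f -` ball c (1 / real (Suc n))))" for n pq
    define cc where "cc n pq = (SOME c. meager (J pq - f -` ball c (1 / real (Suc n))))" for n pq
    define Wn where "Wn n = (\<Union>pq\<in>{pq. good n pq}. J pq)" for n
    define B where "B = (\<Union>n. U - Wn n) \<union>
         (\<Union>n. \<Union>pq\<in>{pq. good n pq}. J pq - f -` ball (cc n pq) (1 / real (Suc n)))"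
    have goodM: "meager (J pq - f -` ball (cc n pq) (1 / real (Suc n)))" if "good n pq" for n pq
      using that unfolding good_def cc_def by (rule someI_ex)
    have nd: "nowhere_dense (U - Wn n)" for n
      unfolding nowhere_dense_def
    proof (rule ccontr)
      assume "interior (closure (U - Wn n)) \<noteq> {}"
      then obtain x where x: "x \<in> interior (closure (U - Wn n))" by blast
      then obtain r where r: "r > 0" "ball x r \<subseteq> interior (closure (U - Wn n))"
        using open_contains_ball open_interior by blast
      hence r2: "ball x r \<subseteq> closure (U - Wn n)" using interior_subset by blast
      have "x \<in> closure (U - Wn n)" using x interior_subset by blast
      then obtain u where u: "u \<in> U - Wn n" "dist u x < r"
        using r(1) unfolding closure_approachable by blast
      have "open (U \<inter> ball x r)" using U(1) by auto
      moreover have "u \<in> U \<inter> ball x r" using u by (auto simp: dist_commute)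
      ultimately obtain d where d: "d > 0" "ball u d \<subseteq> U \<inter> ball x r"
        using open_contains_ball by blast
      have "\<exists>p' q'. p' \<in> \<rat> \<and> q' \<in> \<rat> \<and> p' < q' \<and> {p'<..<q'} \<subseteq> {u-d<..<u+d}
           \<and> (\<exists>c. meager ({p'<..<q'} - f -` ball c (1 / real (Suc n))))"
        by (rule key[OF op bp nm sw US]) (use d in \<open>auto simp: ball_eq_greaterThanLessThan\<close>)
      then obtain p' q' c where pq: "p' \<in> \<rat>" "q' \<in> \<rat>" "p' < q'" "{p'<..<q'} \<subseteq> {u-d<..<u+d}"
        "meager ({p'<..<q'} - f -` ball c (1 / real (Suc n)))" by blast
      obtain p0 where p0: "p' = real_of_rat p0" using pq(1) Rats_cases by blast
      obtain q0 where q0: "q' = real_of_rat q0" using pq(2) Rats_cases by blast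
      have Jpq: "J (p0, q0) = {p'<..<q'}" unfolding J_def using p0 q0 by simp
      have "good n (p0,q0)" unfolding good_def Jpq using pq(5) by blast
      hence JW: "{p'<..<q'} \<subseteq> Wn n" unfolding Wn_def using Jpq by blast
      have "{p'<..<q'} \<subseteq> closure (U - Wn n)"
        using pq(4) d(2) r2 by (auto simp: ball_eq_greaterThanLessThan)
      moreover have "{p'<..<q'} \<noteq> {}" using pq(3) by simp
      ultimately have "{p'<..<q'} \<inter> closure (U - Wn n) \<noteq> {}" by blast
      hence "{p'<..<q'} \<inter> (U - Wn n) \<noteq> {}" using open_Int_closure_eq_empty[of "{p'<..<q'}"] by auto
      thus False using JW by blast
    qed
    have "meager B" unfolding B_def
    proof (rule meager_Un)
      show "meager (\<Union>n. U - Wn n)"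
        by (rule meager_UN) (auto intro: nowhere_dense_meager nd)
      show "meager (\<Union>n. \<Union>pq\<in>{pq. good n pq}. J pq - f -` ball (cc n pq) (1 / real (Suc n)))"
        by (intro meager_UN countableI_type goodM) auto
    qed
    have "U \<inter> S - B \<noteq> {}"
    proof
      assume "U \<inter> S - B = {}"
      hence "U \<inter> S \<subseteq> B" by blast
      thus False using USnm \<open>meager B\<close> meager_subset by blast
    qed
    then obtain y where y: "y \<in> U" "y \<in> S" "y \<notin> B" by blast
    have "y \<in> cont_points tau_star_open f" unfolding cont_points_def
    proof (intro CollectI allI impI)
      fix V assume V: "open V \<and> f y \<in> V"
      then obtain \<epsilon> where \<epsilon>: "\<epsilon> > 0" "ball (f y) \<epsilon> \<subseteq> V" using open_contains_ball by blast
      obtain n where n: "inverse (real (Suc n)) < \<epsilon> / 2" using reals_Archimedean[of "\<epsilon>/2"] \<epsilon> by auto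
      have "y \<in> Wn n" using y unfolding B_def by blast
      then obtain pq where pq: "good n pq" "y \<in> J pq" unfolding Wn_def by blast
      let ?M = "J pq - f -` ball (cc n pq) (1 / real (Suc n))"
      have "y \<notin> ?M"
      proof
        assume "y \<in> ?M"
        hence "y \<in> B" unfolding B_def
          by (intro UnI2 UN_I[of n] UN_I[of pq]) (use pq(1) in auto)
        thus False using y(3) by blast
      qed
      hence fy: "f y \<in> ball (cc n pq) (1 / real (Suc n))" using pq(2) by (metis DiffI vimage_eq)
      have oJ: "open (J pq)" by (simp add: J_def)
      have ts: "tau_star_open (J pq - ?M)" unfolding tau_star_open_def
        by (intro exI[of _ "J pq"] exI[of _ ?M] conjI oJ goodM[OF pq(1)] refl)
      have "f ` (J pq - ?M) \<subseteq> ball (f y) \<epsilon>"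
      proof
        fix t assume "t \<in> f ` (J pq - ?M)"
        hence "t \<in> ball (cc n pq) (1 / real (Suc n))" by auto
        moreover have d: "1 / real (Suc n) < \<epsilon> / 2" using n by (simp add: inverse_eq_divide)
        ultimately show "t \<in> ball (f y) \<epsilon>" using fy
          unfolding mem_ball dist_real_def by linarith
      qed
      then show "\<exists>W. tau_star_open W \<and> y \<in> W \<and> f ` W \<subseteq> V"
        using ts pq(2) \<epsilon>(2) fy by (intro exI[of _ "J pq - ?M"]) auto
    qed
    moreover have "min a b < y" "y < max a b" "f a < f y" "f y < f b"
      using y(2) S0(3) unfolding S_def by auto
    ultimately show "\<exists>x\<in>cont_points tau_star_open f. min a b < x \<and> x < max a b \<and> f a < f x \<and> f x < f b"
      by blast
  qed
qed

end
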